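(* Let $a\ge 0$ be an integer and $\mathbf{t}=2^a(1+\mathbf{i})$. Then in $H_{1,2,2}$ the left ideal $H_{1,2,2}\,\mathbf{t}$, the right ideal $\mathbf{t}\,H_{1,2,2}$, and the two-sided ideal generated by $\mathbf{t}$ are all the same set.
   Context: Let $\mathbf{i},\mathbf{j},\mathbf{k}$ be the standard quaternion units. $H_{1,2,2}$ is the subring of the quaternions equal to the $\mathbb{Z}$-module generated by $\mathbf{v}_1=1$, $\mathbf{v}_2=\mathbf{i}$, $\mathbf{v}_3=\tfrac12(1+\mathbf{i}+\sqrt2\,\mathbf{j})$, $\mathbf{v}_4=\tfrac12(1+\mathbf{i}+\sqrt2\,\mathbf{k})$. *)

theory Defs
  imports Complex_Main
begin

datatype quat = Quat (qre: real) (qi: real) (qj: real) (qk: real)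

instantiation quat :: ring_1
begin
definition "0 = Quat 0 0 0 0"
definition "1 = Quat 1 0 0 0"
definition "x + y = Quat (qre x + qre y) (qi x + qi y) (qj x + qj y) (qk x + qk y)"
definition "x - y = Quat (qre x - qre y) (qi x - qi y) (qj x - qj y) (qk x - qk y)"
definition "- x = Quat (- qre x) (- qi x) (- qj x) (- qk x)"
definition "x * y = Quat
   (qre x * qre y - qi x * qi y - qj x * qj y - qk x * qk y)
   (qre x * qi y + qi x * qre y + qj x * qk y - qk x * qj y)
   (qre x * qj y - qi x * qk y + qj x * qre y + qk x * qi y)
   (qre x * qk y + qi x * qj y - qj x * qi y + qk x * qre y)"
instance
  by standard (simp_all add: zero_quat_def one_quat_def plus_quat_def minus_quat_def
      uminus_quat_def times_quat_def algebra_simps quat.expand)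
end

definition qI :: quat where "qI = Quat 0 1 0 0"
definition qJ :: quat where "qJ = Quat 0 0 1 0"
definition qK :: quat where "qK = Quat 0 0 0 1"

definition qreal :: "real \<Rightarrow> quat" where "qreal r = Quat r 0 0 0"

definition v1 :: quat where "v1 = 1"
definition v2 :: quat where "v2 = qI"
definition v3 :: quat where "v3 = qreal (1/2) * (1 + qI + qreal (sqrt 2) * qJ)"
definition v4 :: quat where "v4 = qreal (1/2) * (1 + qI + qreal (sqrt 2) * qK)"

definition H122 :: "quat set" where
  "H122 = {of_int a * v1 + of_int b * v2 + of_int c * v3 + of_int d * v4 | a b c d :: int. True}"

inductive_set two_sided_ideal :: "quat set \<Rightarrow> quat \<Rightarrow> quat set" for R t where
  zero: "0 \<in> two_sided_ideal R t"
| gen: "x \<in> R \<Longrightarrow> y \<in> R \<Longrightarrow> x * t * y \<in> two_sided_ideal R t"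
| add: "u \<in> two_sided_ideal R t \<Longrightarrow> w \<in> two_sided_ideal R t \<Longrightarrow> u + w \<in> two_sided_ideal R t"

end

theory Submission
  imports Defs
begin

definition mkq :: "real \<Rightarrow> real \<Rightarrow> real \<Rightarrow> real \<Rightarrow> quat" where
  "mkq a b c d = Quat (a + c/2 + d/2) (b + c/2 + d/2) (c * sqrt 2 / 2) (d * sqrt 2 / 2)"

lemma of_nat_quat: "(of_nat n :: quat) = Quat (of_nat n) 0 0 0"
  by (induction n) (simp_all add: zero_quat_def one_quat_def plus_quat_def)
lemma of_int_quat: "(of_int n :: quat) = Quat (of_int n) 0 0 0"
proof (cases n rule: int_cases)
  case (nonneg m) then show ?thesis by (simp add: of_nat_quat)
next
  case (neg m) then show ?thesis
    by (simp add: of_nat_quat uminus_quat_def plus_quat_def one_quat_def minus_quat_def)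
qed
lemma comb: "of_int a * v1 + of_int b * v2 + of_int c * v3 + of_int d * v4 = mkq (of_int a) (of_int b) (of_int c) (of_int d)"
  unfolding of_int_quat v1_def v2_def v3_def v4_def mkq_def qreal_def qI_def qJ_def qK_def
      one_quat_def plus_quat_def times_quat_def quat.sel quat.inject
  by (simp add: field_simps)
lemma H_mk: "H122 = {mkq (of_int a) (of_int b) (of_int c) (of_int d) | a b c d :: int. True}"
  unfolding H122_def comb ..
lemma mk_mult_gen: assumes r: "r * r = (2::real)" shows "Quat (a + c/2 + d/2) (b + c/2 + d/2) (c * r / 2) (d * r / 2) * Quat (e + g/2 + h/2) (f + g/2 + h/2) (g * r / 2) (h * r / 2) = Quat
  ((a*e - b*f - b*g - c*g - d*f - d*g - d*h) + (a*g - b*h + c*e + c*g + d*f + d*g)/2 + (a*h + b*g - c*f + d*e + d*g + d*h)/2)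
  ((a*f + b*e + b*h + c*f + c*h - d*g) + (a*g - b*h + c*e + c*g + d*f + d*g)/2 + (a*h + b*g - c*f + d*e + d*g + d*h)/2)
  ((a*g - b*h + c*e + c*g + d*f + d*g) * r / 2)
  ((a*h + b*g - c*f + d*e + d*g + d*h) * r / 2)"
proof -
  have rr: "\<And>x. r * (r * x) = 2 * x" using r by (metis mult.assoc)
  show ?thesis unfolding times_quat_def quat.sel quat.inject
    by (intro conjI) (simp_all add: field_simps rr)
qed
lemma mk_t1_gen: "Quat (a + c/2 + d/2) (b + c/2 + d/2) (c * r / 2) (d * r / 2) * Quat p p 0 0 = Quat p p 0 0 * Quat ((a+c) + d/2 + (-c)/2) ((b+c) + d/2 + (-c)/2) (d * r / 2) ((-c) * r / 2)"
  unfolding times_quat_def quat.sel quat.inject 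
  by (simp add: field_simps)
lemma mk_t2_gen: "Quat p p 0 0 * Quat (a + c/2 + d/2) (b + c/2 + d/2) (c * r / 2) (d * r / 2) = Quat ((a+d) + (-d)/2 + c/2) ((b+d) + (-d)/2 + c/2) ((-d) * r / 2) (c * r / 2) * Quat p p 0 0"
  unfolding times_quat_def quat.sel quat.inject 
  by (simp add: field_simps)
lemma mk_mult: "mkq a b c d * mkq e f g h = mkq
  (a*e - b*f - b*g - c*g - d*f - d*g - d*h)
  (a*f + b*e + b*h + c*f + c*h - d*g)
  (a*g - b*h + c*e + c*g + d*f + d*g)
  (a*h + b*g - c*f + d*e + d*g + d*h)"
  unfolding mkq_def by (rule mk_mult_gen) simp

lemma mk_add: "mkq a b c d + mkq e f g h = mkq (a+e) (b+f) (c+g) (d+h)"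
  by (simp add: mkq_def plus_quat_def field_simps)

lemma mk_t1: "mkq a b c d * Quat p p 0 0 = Quat p p 0 0 * mkq (a+c) (b+c) d (-c)"
  unfolding mkq_def by (rule mk_t1_gen)

lemma mk_t2: "Quat p p 0 0 * mkq a b c d = mkq (a+d) (b+d) (-d) c * Quat p p 0 0"
  unfolding mkq_def by (rule mk_t2_gen)

lemma mkH: "mkq (of_int a) (of_int b) (of_int c) (of_int d) \<in> H122"
  unfolding H_mk by blast

lemma H_mult: "x \<in> H122 \<Longrightarrow> y \<in> H122 \<Longrightarrow> x * y \<in> H122"
proof -
  assume "x \<in> H122" "y \<in> H122"
  then obtain a b c d e f g h :: int where x: "x = mkq a b c d" and y: "y = mkq e f g h"
    unfolding H_mk by blast
  have "x * y = mkq (of_int (a*e - b*f - b*g - c*g - d*f - d*g - d*h))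
    (of_int (a*f + b*e + b*h + c*f + c*h - d*g))
    (of_int (a*g - b*h + c*e + c*g + d*f + d*g))
    (of_int (a*h + b*g - c*f + d*e + d*g + d*h))"
    unfolding x y mk_mult by simp
  then show ?thesis by (metis mkH)
qed

theorem lemma10:
  fixes a :: nat
  defines "t \<equiv> qreal (2 ^ a) * (1 + qI)"
  shows "(\<lambda>x. x * t) ` H122 = (\<lambda>x. t * x) ` H122
       \<and> (\<lambda>x. t * x) ` H122 = two_sided_ideal H122 t"
proof -
  define p :: real where "p = 2 ^ a"
  have t: "t = Quat p p 0 0"
    unfolding t_def p_def by (simp add: qreal_def qI_def one_quat_def plus_quat_def times_quat_def)
  have L1: "x * t \<in> (\<lambda>x. t * x) ` H122" if "x \<in> H122" for x
  proof -
    from that obtain a b c d :: int where x: "x = mkq a b c d" unfolding H_mk by blast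
    have "x * t = t * mkq (of_int (a+c)) (of_int (b+c)) (of_int d) (of_int (-c))"
      unfolding x t mk_t1 by simp
    then show ?thesis using mkH by blast
  qed
  have L2: "t * x \<in> (\<lambda>x. x * t) ` H122" if "x \<in> H122" for x
  proof -
    from that obtain a b c d :: int where x: "x = mkq a b c d" unfolding H_mk by blast
    have "t * x = mkq (of_int (a+d)) (of_int (b+d)) (of_int (-d)) (of_int c) * t"
      unfolding x t mk_t2 by simp
    then show ?thesis using mkH by blast
  qed
  have eq: "(\<lambda>x. x * t) ` H122 = (\<lambda>x. t * x) ` H122"
    using L1 L2 by blast
  have one: "1 \<in> H122" unfolding H122_def
    by (rule CollectI, rule exI[of _ 1], (rule exI[of _ 0])+) (simp add: v1_def)
  have zero: "0 \<in> H122" unfolding H122_def by (rule CollectI, (rule exI[of _ 0])+) simp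
  have addH: "x + y \<in> H122" if hx: "x \<in> H122" and hy: "y \<in> H122" for x y
  proof -
    obtain a1 b c d :: int where x: "x = mkq a1 b c d"
      using hx unfolding H_mk by blast
    obtain e f g h :: int where y: "y = mkq e f g h"
      using hy unfolding H_mk by blast
    have "x + y = mkq (of_int (a1+e)) (of_int (b+f)) (of_int (c+g)) (of_int (d+h))"
      unfolding x y mk_add by simp
    then show ?thesis by (metis mkH)
  qed
  have sub: "u \<in> (\<lambda>x. x * t) ` H122" if "u \<in> two_sided_ideal H122 t" for u
    using that
  proof induction
    case zero
    then show ?case using \<open>0 \<in> H122\<close> by (metis image_eqI mult_zero_left)
  next
    case (gen x y)
    from L2[OF gen(2)] obtain y' where y': "y' \<in> H122" "t * y = y' * t" by blast
    have "x * t * y = (x * y') * t" using y' by (simp add: mult.assoc)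
    then show ?case using H_mult[OF gen(1) y'(1)] by blast
  next
    case (add u w)
    then obtain u' w' where "u' \<in> H122" "w' \<in> H122" "u = u' * t" "w = w' * t" by blast
    then show ?case using addH[of u' w'] by (metis distrib_right image_eqI)
  qed
  have sup: "x * t \<in> two_sided_ideal H122 t" if "x \<in> H122" for x
    using two_sided_ideal.gen[OF that one] by simp
  have "two_sided_ideal H122 t \<subseteq> (\<lambda>x. x * t) ` H122" using sub by blast
  moreover have "(\<lambda>x. x * t) ` H122 \<subseteq> two_sided_ideal H122 t" using sup by blast
  ultimately have "(\<lambda>x. x * t) ` H122 = two_sided_ideal H122 t" by (rule antisym[rotated])
  then show ?thesis using eq by simp
qed

end
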